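(* Let $X$ be a non-empty set, $\overline X=X\cup X'$ and $\widetilde X=\overline X\cup\{(x\wedge y):x,y\in\overline X\}$. Make the free semigroup $\widetilde X^+$ into a binary semigroup by $(u\wedge v)=(\iota u\wedge v\tau)$ for $u,v\in\widetilde X^+$. Then the relation $\widetilde\Theta(\mathcal{CS},X)=\{(u,v)\in\widetilde X^+\times\widetilde X^+:\overline{u}=\overline{v}\}$ (where $\overline{w}$ denotes the reduced form of $w$) is a congruence on the binary semigroup $\widetilde X^+$, and the factor $\widetilde X^+/\widetilde\Theta(\mathcal{CS},X)$ together with the matched mapping $\xi\colon\overline X\to \widetilde X^+/\widetilde\Theta(\mathcal{CS},X)$, $y\mapsto y\widetilde\Theta(\mathcal{CS},X)$, is a bifree object in the class $\mathcal{CS}$ of completely simple semigroups on $X$.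
   Context: $X'=\{x':x\in X\}$ is a set disjoint from $X$ in bijection with $X$ via $x\mapsto x'$; extend $'$ to $\overline X$ by $(x')'=x$. The free binary semigroup $F_2(\overline X)$ is the smallest set $W$ of nonempty words over $\overline X\cup\{(,\wedge,)\}$ containing $\overline X$ and closed under concatenation $uv$ and under $(u,v)\mapsto(u\wedge v)$, with these two operations. Elements $(x\wedge y)$, $x,y\in\overline X$, are called $\wedge$-letters; $\widetilde X^+$ is the free semigroup on $\widetilde X$, viewed as a subset of $F_2(\overline X)$. For a term $w$, $\iota w$ [$w\tau$] is the first [last] element of $\overline X$ occurring in $w$. Reductions ($u,v$ terms, $x,y,z\in\overline X$): (R0) $(u\wedge v)\rightsquigarrow(\iota u\wedge v\tau)$; (R1) $x(y\wedge x)\rightsquigarrow x$; (R2) $(x\wedge y)x\rightsquigarrow x$; (R3) $(x\wedge y)(x\wedge z)\rightsquigarrow(x\wedge z)$; (R4) $(z\wedge x)(y\wedge x)\rightsquigarrow(z\wedge x)$; (R5) $x'x\rightsquigarrow(x'\wedge x)$, applied to segments of a term. It is known (Auinger) that every term has a unique reduced form (one to which no reduction applies) obtainable by repeated reductions; denote it $\overline w$. For a regular semigroup $S$, a map $\nu\colon\overline X\to S$ is matched if $x'\nu$ is an inverse of $x\nu$ for all $x\in X$. A bifree object in a class $\mathcal K$ of regular semigroups on $X$ is $B\in\mathcal K$ with a matched map $\xi\colon\overline X\to B$ such that for every $S\in\mathcal K$ and matched $\nu\colon\overline X\to S$ there is a unique homomorphism $\phi\colon B\to S$ with $\xi\phi=\nu$.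 *)

theory Defs
  imports "HOL-Algebra.Group"
begin

text \<open>A semigroup is given by a monoid record of HOL-Algebra; its one field is ignored.\<close>

definition semigrp :: "('b, 'c) monoid_scheme \<Rightarrow> bool" where
  "semigrp S \<longleftrightarrow>
     (\<forall>x \<in> carrier S. \<forall>y \<in> carrier S. x \<otimes>\<^bsub>S\<^esub> y \<in> carrier S) \<and>
     (\<forall>x \<in> carrier S. \<forall>y \<in> carrier S. \<forall>z \<in> carrier S.
        (x \<otimes>\<^bsub>S\<^esub> y) \<otimes>\<^bsub>S\<^esub> z = x \<otimes>\<^bsub>S\<^esub> (y \<otimes>\<^bsub>S\<^esub> z))"

definition sg_ideal :: "('b, 'c) monoid_scheme \<Rightarrow> 'b set \<Rightarrow> bool" where
  "sg_ideal S I \<longleftrightarrow> I \<subseteq> carrier S \<and> I \<noteq> {} \<and>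
     (\<forall>s \<in> carrier S. \<forall>i \<in> I. s \<otimes>\<^bsub>S\<^esub> i \<in> I \<and> i \<otimes>\<^bsub>S\<^esub> s \<in> I)"

definition sg_simple :: "('b, 'c) monoid_scheme \<Rightarrow> bool" where
  "sg_simple S \<longleftrightarrow> (\<forall>I. sg_ideal S I \<longrightarrow> I = carrier S)"

definition sg_idempotent :: "('b, 'c) monoid_scheme \<Rightarrow> 'b \<Rightarrow> bool" where
  "sg_idempotent S e \<longleftrightarrow> e \<in> carrier S \<and> e \<otimes>\<^bsub>S\<^esub> e = e"

text \<open>Primitive idempotent: minimal among idempotents w.r.t. the natural order
  (f \<le> e iff f = ef = fe).\<close>
definition sg_primitive :: "('b, 'c) monoid_scheme \<Rightarrow> 'b \<Rightarrow> bool" where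
  "sg_primitive S e \<longleftrightarrow> sg_idempotent S e \<and>
     (\<forall>f. sg_idempotent S f \<and> f = e \<otimes>\<^bsub>S\<^esub> f \<and> f = f \<otimes>\<^bsub>S\<^esub> e \<longrightarrow> f = e)"

definition completely_simple :: "('b, 'c) monoid_scheme \<Rightarrow> bool" where
  "completely_simple S \<longleftrightarrow> semigrp S \<and> carrier S \<noteq> {} \<and> sg_simple S \<and>
     (\<exists>e. sg_primitive S e)"

definition sg_inverse :: "('b, 'c) monoid_scheme \<Rightarrow> 'b \<Rightarrow> 'b \<Rightarrow> bool" where
  "sg_inverse S a b \<longleftrightarrow> a \<in> carrier S \<and> b \<in> carrier S \<and>
     a \<otimes>\<^bsub>S\<^esub> b \<otimes>\<^bsub>S\<^esub> a = a \<and> b \<otimes>\<^bsub>S\<^esub> a \<otimes>\<^bsub>S\<^esub> b = b"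

text \<open>Elements of X-bar = X \<union> X': Pos x stands for x, Neg x for x'. The set X is the
  (arbitrary, automatically non-empty) type 'a.\<close>
datatype 'a lit = Pos 'a | Neg 'a

fun lprime :: "'a lit \<Rightarrow> 'a lit" where
  "lprime (Pos x) = Neg x"
| "lprime (Neg x) = Pos x"

text \<open>Matched map X-bar \<rightarrow> S: x' \<nu> is an inverse of x \<nu> for every x in X
  (values in the carrier are implied).\<close>
definition matched :: "('b, 'c) monoid_scheme \<Rightarrow> ('a lit \<Rightarrow> 'b) \<Rightarrow> bool" where
  "matched S \<nu> \<longleftrightarrow> (\<forall>x. sg_inverse S (\<nu> (Pos x)) (\<nu> (Neg x)))"

text \<open>Letters of X-tilde: Lt x is x \<in> X-bar, Wg x y is the wedge letter (x \<and> y).\<close>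
datatype 'a tlet = Lt "'a lit" | Wg "'a lit" "'a lit"

fun first_lit :: "'a tlet \<Rightarrow> 'a lit" where
  "first_lit (Lt x) = x"
| "first_lit (Wg x y) = x"

fun last_lit :: "'a tlet \<Rightarrow> 'a lit" where
  "last_lit (Lt x) = x"
| "last_lit (Wg x y) = y"

text \<open>Words of X-tilde^+ are non-empty lists of letters.\<close>
definition iota :: "'a tlet list \<Rightarrow> 'a lit" where
  "iota w = first_lit (hd w)"

definition tau :: "'a tlet list \<Rightarrow> 'a lit" where
  "tau w = last_lit (last w)"

definition wedge :: "'a tlet list \<Rightarrow> 'a tlet list \<Rightarrow> 'a tlet list" where
  "wedge u v = [Wg (iota u) (tau v)]"

text \<open>One-step reductions (R1)--(R5) applied to segments. On words of X-tilde^+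
  (R0) never applies, and the reductions keep us inside X-tilde^+.\<close>
inductive_set red1 :: "('a tlet list \<times> 'a tlet list) set" where
  R1: "(u @ [Lt x, Wg y x] @ v, u @ [Lt x] @ v) \<in> red1"
| R2: "(u @ [Wg x y, Lt x] @ v, u @ [Lt x] @ v) \<in> red1"
| R3: "(u @ [Wg x y, Wg x z] @ v, u @ [Wg x z] @ v) \<in> red1"
| R4: "(u @ [Wg z x, Wg y x] @ v, u @ [Wg z x] @ v) \<in> red1"
| R5: "(u @ [Lt (lprime x), Lt x] @ v, u @ [Wg (lprime x) x] @ v) \<in> red1"

definition reduced :: "'a tlet list \<Rightarrow> bool" where
  "reduced w \<longleftrightarrow> (\<forall>w'. (w, w') \<notin> red1)"

text \<open>The reduced form (unique by Auinger's theorem).\<close>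
definition redform :: "'a tlet list \<Rightarrow> 'a tlet list" where
  "redform w = (THE r. (w, r) \<in> red1\<^sup>* \<and> reduced r)"

definition words :: "'a tlet list set" where
  "words = {w. w \<noteq> []}"

definition Theta_CS :: "('a tlet list \<times> 'a tlet list) set" where
  "Theta_CS = {(u, v). u \<in> words \<and> v \<in> words \<and> redform u = redform v}"

definition bs_congruence :: "('a tlet list \<times> 'a tlet list) set \<Rightarrow> bool" where
  "bs_congruence R \<longleftrightarrow> equiv words R \<and>
     (\<forall>(u, v) \<in> R. \<forall>(s, t) \<in> R. (u @ s, v @ t) \<in> R \<and> (wedge u s, wedge v t) \<in> R)"

definition FQ :: "'a tlet list set monoid" where
  "FQ = \<lparr> carrier = words // Theta_CS,
          mult = (\<lambda>A B. Theta_CS `` {(SOME u. u \<in> A) @ (SOME v. v \<in> B)}),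
          one = undefined \<rparr>"

definition xi :: "'a lit \<Rightarrow> 'a tlet list set" where
  "xi y = Theta_CS `` {[Lt y]}"

end

theory Submission
  imports Defs
begin
fun comb :: "'a tlet \<Rightarrow> 'a tlet \<Rightarrow> 'a tlet option" where
  "comb (Lt x) (Lt y) = (if x = lprime y then Some (Wg x y) else None)"
| "comb (Lt x) (Wg y z) = (if z = x then Some (Lt x) else None)"
| "comb (Wg x y) (Lt z) = (if z = x then Some (Lt z) else None)"
| "comb (Wg x y) (Wg z w) = (if x = z then Some (Wg x w) else if y = w then Some (Wg x y) else None)"

fun push :: "'a tlet list \<Rightarrow> 'a tlet \<Rightarrow> 'a tlet list" where
  "push [] a = [a]"
| "push (e # r) a = (case comb e a of Some f \<Rightarrow> push r f | None \<Rightarrow> a # e # r)"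

definition nf :: "'a tlet list \<Rightarrow> 'a tlet list" where
  "nf w = foldl push [] w"

fun sred :: "'a tlet list \<Rightarrow> bool" where
  "sred [] = True"
| "sred [a] = True"
| "sred (a # e # r) = (comb e a = None \<and> sred (e # r))"

lemma lprime_lprime[simp]: "lprime (lprime x) = x"
  by (cases x) auto

lemma comb_assoc:
  assumes "comb e a = Some f" "comb a b = Some d"
  shows "comb f b = comb e d \<and> (comb f b = None \<longrightarrow> f = e \<and> b = d)"
  using assms by (cases e; cases a; cases b) (auto split: if_splits)

lemma comb_ends:
  assumes "comb a b = Some c"
  shows "first_lit c = first_lit a \<and> last_lit c = last_lit b"
  using assms by (cases a; cases b) (auto split: if_splits)

lemma comb_red1:
  assumes "comb a b = Some c"
  shows "(u @ [a, b] @ v, u @ [c] @ v) \<in> red1"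
  using assms
proof (cases a; cases b)
  fix x y assume "a = Lt x" "b = Lt y"
  with assms have "x = lprime y" "c = Wg x y" by (auto split: if_splits)
  then show ?thesis using red1.R5[of u y v] \<open>a = Lt x\<close> \<open>b = Lt y\<close> by simp
next
  fix x y z assume "a = Lt x" "b = Wg y z"
  with assms have "z = x" "c = Lt x" by (auto split: if_splits)
  then show ?thesis using red1.R1[of u x y v] \<open>a = Lt x\<close> \<open>b = Wg y z\<close> by simp
next
  fix x y z assume "a = Wg x y" "b = Lt z"
  with assms have "z = x" "c = Lt x" by (auto split: if_splits)
  then show ?thesis using red1.R2[of u x y v] \<open>a = Wg x y\<close> \<open>b = Lt z\<close> by simp
next
  fix x y z w assume ab: "a = Wg x y" "b = Wg z w"
  show ?thesis
  proof (cases "x = z")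
    case True
    with assms ab have "c = Wg x w" by auto
    then show ?thesis using red1.R3[of u x y w v] ab True by simp
  next
    case False
    with assms ab have "y = w" "c = Wg x y" by (auto split: if_splits)
    then show ?thesis using red1.R4[of u x y z v] ab by simp
  qed
qed

lemma red1_comb:
  assumes "(s, t) \<in> red1"
  shows "\<exists>u v a b c. s = u @ [a, b] @ v \<and> t = u @ [c] @ v \<and> comb a b = Some c"
  using assms
proof cases
  case (R1 u x y v) then show ?thesis by (intro exI[of _ u] exI[of _ v]) auto
next
  case (R2 u x y v) then show ?thesis by (intro exI[of _ u] exI[of _ v]) auto
next
  case (R3 u x y z v) then show ?thesis by (intro exI[of _ u] exI[of _ v]) auto
next
  case (R4 u z x y v) then show ?thesis by (intro exI[of _ u] exI[of _ v]) auto
next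
  case (R5 u x v) then show ?thesis by (intro exI[of _ u] exI[of _ v]) auto
qed

lemma red1_ctx:
  assumes "(s, t) \<in> red1"
  shows "(p @ s @ q, p @ t @ q) \<in> red1"
proof -
  obtain u v a b c where "s = u @ [a, b] @ v" "t = u @ [c] @ v" "comb a b = Some c"
    using red1_comb[OF assms] by blast
  then show ?thesis using comb_red1[of a b c "p @ u" "v @ q"] by simp
qed

lemma red1s_ctx:
  assumes "(s, t) \<in> red1\<^sup>*"
  shows "(p @ s @ q, p @ t @ q) \<in> red1\<^sup>*"
  using assms
proof induction
  case base then show ?case by simp
next
  case (step y z) then show ?case using red1_ctx[of y z p q] by (meson rtrancl.rtrancl_into_rtrancl)
qed

lemma sred_push: "sred r \<Longrightarrow> sred (push r a)"
proof (induction r a rule: push.induct)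
  case (1 a) then show ?case by simp
next
  case (2 e r a)
  show ?case
  proof (cases "comb e a")
    case None then show ?thesis using 2 by simp
  next
    case (Some f)
    have "sred r" using 2(2) by (cases r) auto
    then show ?thesis using 2(1)[OF Some] Some by simp
  qed
qed

lemma sred_foldl: "sred r \<Longrightarrow> sred (foldl push r w)"
  by (induction w arbitrary: r) (auto intro: sred_push)

lemma sred_nf: "sred (nf w)"
  unfolding nf_def by (rule sred_foldl) simp

lemma sred_push_top: "sred (e # r) \<Longrightarrow> push r e = e # r"
  by (cases r) auto

lemma push_assoc:
  "sred r \<Longrightarrow> comb a b = Some d \<Longrightarrow> push (push r a) b = push r d"
proof (induction r arbitrary: a b d)
  case Nil then show ?case by simp
next
  case (Cons e r0)
  have s0: "sred r0" using Cons.prems(1) by (cases r0) auto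
  show ?case
  proof (cases "comb e a")
    case None then show ?thesis using Cons.prems by simp
  next
    case (Some f)
    have ca: "comb f b = comb e d \<and> (comb f b = None \<longrightarrow> f = e \<and> b = d)"
      using comb_assoc[OF Some Cons.prems(2)] .
    show ?thesis
    proof (cases "comb f b")
      case None
      with ca have "f = e" "b = d" "comb e d = None" by auto
      then show ?thesis using Some None sred_push_top[OF Cons.prems(1)] by simp
    next
      case (Some g)
      with ca have "comb e d = Some g" by simp
      then show ?thesis using Cons.IH[OF s0 Some] \<open>comb e a = Some f\<close> by simp
    qed
  qed
qed

lemma foldl_red1:
  assumes "sred r" "(s, t) \<in> red1"
  shows "foldl push r s = foldl push r t"
proof -
  obtain u v a b c where st: "s = u @ [a, b] @ v" "t = u @ [c] @ v" "comb a b = Some c"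
    using red1_comb[OF assms(2)] by blast
  have "sred (foldl push r u)" using sred_foldl[OF assms(1)] .
  then show ?thesis using st push_assoc[of "foldl push r u" a b c] by simp
qed

lemma foldl_red1s:
  assumes "sred r" "(s, t) \<in> red1\<^sup>*"
  shows "foldl push r s = foldl push r t"
  using assms(2) by induction (auto simp: foldl_red1[OF assms(1)])

lemma nf_red1s: "(s, t) \<in> red1\<^sup>* \<Longrightarrow> nf s = nf t"
  unfolding nf_def by (rule foldl_red1s) auto

lemma push_reach: "(rev r @ [a], rev (push r a)) \<in> red1\<^sup>*"
proof (induction r a rule: push.induct)
  case (1 a) then show ?case by simp
next
  case (2 e r a)
  show ?case
  proof (cases "comb e a")
    case None then show ?thesis by simp
  next
    case (Some f)
    have "(rev r @ [e, a] @ [], rev r @ [f] @ []) \<in> red1" by (rule comb_red1[OF Some])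
    then have "(rev (e # r) @ [a], rev r @ [f]) \<in> red1" by simp
    then show ?thesis using 2[OF Some] Some by simp
  qed
qed

lemma foldl_reach: "(rev r @ w, rev (foldl push r w)) \<in> red1\<^sup>*"
proof (induction w arbitrary: r)
  case Nil then show ?case by simp
next
  case (Cons a w)
  have "([] @ (rev r @ [a]) @ w, [] @ rev (push r a) @ w) \<in> red1\<^sup>*"
    by (rule red1s_ctx[OF push_reach])
  then have "(rev r @ a # w, rev (push r a) @ w) \<in> red1\<^sup>*" by simp
  also have "(rev (push r a) @ w, rev (foldl push (push r a) w)) \<in> red1\<^sup>*" by (rule Cons.IH)
  finally show ?case by simp
qed

lemma nf_reach: "(w, rev (nf w)) \<in> red1\<^sup>*"
  using foldl_reach[of "[]" w] unfolding nf_def by simp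

lemma sred_mid: "sred (p @ b # a # q) \<Longrightarrow> comb a b = None"
proof (induction p)
  case Nil then show ?case by simp
next
  case (Cons x p)
  then show ?case by (cases p) auto
qed

lemma sred_reduced: "sred r \<Longrightarrow> reduced (rev r)"
  unfolding reduced_def
proof (intro allI notI)
  fix t assume s: "sred r" and "(rev r, t) \<in> red1"
  then obtain u v a b c where "rev r = u @ [a, b] @ v" "comb a b = Some c"
    using red1_comb by blast
  then have "r = rev v @ b # a # rev u" by (metis append.assoc append_Cons append_Nil rev.simps(2) rev_append rev_rev_ident rev_singleton_conv)
  then show False using s sred_mid \<open>comb a b = Some c\<close> by fastforce
qed

lemma redform_nf: "redform w = rev (nf w)"
  unfolding redform_def
proof (rule the_equality)
  show "(w, rev (nf w)) \<in> red1\<^sup>* \<and> reduced (rev (nf w))"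
    using nf_reach sred_reduced[OF sred_nf] by blast
next
  fix r assume r: "(w, r) \<in> red1\<^sup>* \<and> reduced r"
  then have "nf w = nf r" using nf_red1s by blast
  have "(r, rev (nf r)) \<in> red1\<^sup>*" by (rule nf_reach)
  then have "r = rev (nf r)" using r unfolding reduced_def
    by (metis converse_rtranclE)
  then show "r = rev (nf w)" using \<open>nf w = nf r\<close> by simp
qed

lemma foldl_nf: "sred r \<Longrightarrow> foldl push r v = foldl push r (rev (nf v))"
  by (rule foldl_red1s) (auto intro: nf_reach)

lemma nf_app: "nf (u @ v) = foldl push (nf u) (rev (nf v))"
  unfolding nf_def using foldl_nf[of "foldl push [] u" v] sred_nf[of u]
  by (simp add: nf_def)

lemma nf_cong: "nf u = nf u' \<Longrightarrow> nf v = nf v' \<Longrightarrow> nf (u @ v) = nf (u' @ v')"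
  by (simp add: nf_app)

lemma nf_ctx: "nf u = nf u' \<Longrightarrow> nf (p @ u @ q) = nf (p @ u' @ q)"
  by (intro nf_cong) auto

lemma nf_single[simp]: "nf [a] = [a]"
  by (simp add: nf_def)

lemma nf_comb:
  assumes "comb a b = Some c" shows "nf (p @ [a, b] @ q) = nf (p @ [c] @ q)"
proof -
  have "(p @ [a, b] @ q, p @ [c] @ q) \<in> red1" by (rule comb_red1[OF assms])
  then show ?thesis by (intro nf_red1s) (rule r_into_rtrancl)
qed

lemma red1_nonempty: "(s, t) \<in> red1 \<Longrightarrow> t \<noteq> []"
  by (auto dest: red1_comb)

lemma red1_ends:
  assumes "(s, t) \<in> red1"
  shows "iota s = iota t \<and> tau s = tau t"
proof -
  obtain u v a b c where st: "s = u @ [a, b] @ v" "t = u @ [c] @ v" "comb a b = Some c"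
    using red1_comb[OF assms] by blast
  note e = comb_ends[OF st(3)]
  show ?thesis using st e unfolding iota_def tau_def
    by (cases u; cases v rule: rev_cases) auto
qed

lemma red1s_ends: "(s, t) \<in> red1\<^sup>* \<Longrightarrow> iota s = iota t \<and> tau s = tau t"
  by (induction rule: rtrancl_induct) (auto dest: red1_ends)

lemma iota_nf: "iota w = iota (rev (nf w))"
  using red1s_ends[OF nf_reach] by blast

lemma tau_nf: "tau w = tau (rev (nf w))"
  using red1s_ends[OF nf_reach] by blast

lemma nf_nonempty: "w \<noteq> [] \<Longrightarrow> nf w \<noteq> []"
proof -
  assume "w \<noteq> []"
  have "(w, rev (nf w)) \<in> red1\<^sup>*" by (rule nf_reach)
  then have "rev (nf w) \<noteq> []" using \<open>w \<noteq> []\<close>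
    by (induction rule: rtrancl_induct) (auto dest: red1_nonempty)
  then show "nf w \<noteq> []" by simp
qed

lemma Theta_eq: "Theta_CS = {(u, v). u \<noteq> [] \<and> v \<noteq> [] \<and> nf u = nf v}"
  unfolding Theta_CS_def words_def by (auto simp: redform_nf)

lemma equiv_Theta: "equiv words Theta_CS"
  unfolding equiv_def refl_on_def sym_def trans_def Theta_eq words_def by auto

lemma bs_cong: "bs_congruence Theta_CS"
  unfolding bs_congruence_def
proof (intro conjI equiv_Theta ballI, clarify)
  fix u v s t :: "'a tlet list" assume "(u, v) \<in> Theta_CS" "(s, t) \<in> Theta_CS"
  then have h: "u \<noteq> []" "v \<noteq> []" "s \<noteq> []" "t \<noteq> []" "nf u = nf v" "nf s = nf t"
    by (auto simp: Theta_eq)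
  have "iota u = iota v" using h iota_nf by metis
  moreover have "tau s = tau t" using h tau_nf by metis
  ultimately show "(u @ s, v @ t) \<in> Theta_CS \<and> (wedge u s, wedge v t) \<in> Theta_CS"
    using h nf_cong[of u v s t] by (auto simp: Theta_eq wedge_def)
qed

fun inv1 :: "'a tlet \<Rightarrow> 'a tlet" where
  "inv1 (Lt x) = Lt (lprime x)"
| "inv1 (Wg x y) = Wg x y"

fun invw :: "'a tlet list \<Rightarrow> 'a tlet list" where
  "invw [] = []"
| "invw [v] = [inv1 v]"
| "invw (v # u # w) = invw (u # w) @ [Wg (first_lit u) (last_lit v), inv1 v]"

lemma inv1_left: "\<exists>s. nf [inv1 v, v] = [Wg s (last_lit v)]"
  by (cases v) (auto simp: nf_def)

lemma inv1_right: "\<exists>t. nf [v, inv1 v] = [Wg (first_lit v) t]"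
  by (cases v) (auto simp: nf_def)

lemma invw_left: "w \<noteq> [] \<Longrightarrow> \<exists>s. nf (invw w @ w) = [Wg s (last_lit (last w))]"
proof (induction w rule: invw.induct)
  case 1 then show ?case by simp
next
  case (2 v) then show ?case using inv1_left[of v] by simp
next
  case (3 v u w)
  obtain s0 where s0: "nf [inv1 v, v] = [Wg s0 (last_lit v)]" using inv1_left by blast
  have s0': "nf [inv1 v, v] = nf [Wg s0 (last_lit v)]" using s0 by simp
  obtain s where s: "nf (invw (u # w) @ u # w) = [Wg s (last_lit (last (u # w)))]"
    using 3 by blast
  have "nf (invw (v # u # w) @ v # u # w)
      = nf (invw (u # w) @ [Wg (first_lit u) (last_lit v)] @ [inv1 v, v] @ u # w)" by simp
  also have "\<dots> = nf ((invw (u # w) @ [Wg (first_lit u) (last_lit v)]) @ [Wg s0 (last_lit v)] @ u # w)"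
    using nf_ctx[of "[inv1 v, v]" "[Wg s0 (last_lit v)]", of "invw (u # w) @ [Wg (first_lit u) (last_lit v)]" "u # w"] s0' by simp
  also have "\<dots> = nf (invw (u # w) @ [Wg (first_lit u) (last_lit v), Wg s0 (last_lit v)] @ u # w)" by simp
  also have "\<dots> = nf (invw (u # w) @ [Wg (first_lit u) (last_lit v)] @ u # w)"
    by (rule nf_comb) auto
  also have "\<dots> = nf (invw (u # w) @ [Wg (first_lit u) (last_lit v), u] @ w)" by simp
  also have "\<dots> = nf (invw (u # w) @ [u] @ w)"
    by (rule nf_comb) (cases u; auto)
  also have "\<dots> = [Wg s (last_lit (last (u # w)))]" using s by simp
  finally show ?case by auto
qed

lemma invw_right: "w \<noteq> [] \<Longrightarrow> \<exists>t. nf (w @ invw w) = [Wg (first_lit (hd w)) t]"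
proof (induction w rule: invw.induct)
  case 1 then show ?case by simp
next
  case (2 v) then show ?case using inv1_right[of v] by simp
next
  case (3 v u w)
  obtain t0 where t0: "nf [v, inv1 v] = [Wg (first_lit v) t0]" using inv1_right by blast
  obtain t where t: "nf (u # w @ invw (u # w)) = [Wg (first_lit u) t]"
    using 3 by auto
  have "nf ((v # u # w) @ invw (v # u # w))
      = nf ([v] @ (u # w @ invw (u # w)) @ [Wg (first_lit u) (last_lit v), inv1 v])" by simp
  also have "\<dots> = nf ([v] @ [Wg (first_lit u) t] @ [Wg (first_lit u) (last_lit v), inv1 v])"
    using nf_ctx[of "u # w @ invw (u # w)" "[Wg (first_lit u) t]" "[v]"] t by simp
  also have "\<dots> = nf ([v] @ [Wg (first_lit u) t, Wg (first_lit u) (last_lit v)] @ [inv1 v])" by simp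
  also have "\<dots> = nf ([v] @ [Wg (first_lit u) (last_lit v)] @ [inv1 v])"
    by (rule nf_comb) auto
  also have "\<dots> = nf ([] @ [v, Wg (first_lit u) (last_lit v)] @ [inv1 v])" by simp
  also have "\<dots> = nf ([] @ [v] @ [inv1 v])"
    by (rule nf_comb) (cases v; auto)
  also have "\<dots> = [Wg (first_lit v) t0]" using t0 by simp
  finally show ?case by auto
qed

definition cls :: "'a tlet list \<Rightarrow> 'a tlet list set" where
  "cls w = Theta_CS `` {w}"

lemma mem_cls: "v \<in> cls u \<longleftrightarrow> u \<noteq> [] \<and> v \<noteq> [] \<and> nf u = nf v"
  unfolding cls_def Theta_eq by auto

lemma cls_eq: "u \<noteq> [] \<Longrightarrow> v \<noteq> [] \<Longrightarrow> cls u = cls v \<longleftrightarrow> nf u = nf v"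
  unfolding cls_def using eq_equiv_class_iff[OF equiv_Theta, of u v]
  by (auto simp: words_def Theta_eq)

lemma carrier_FQ: "A \<in> carrier FQ \<longleftrightarrow> (\<exists>w. w \<noteq> [] \<and> A = cls w)"
  unfolding FQ_def quotient_def cls_def words_def by auto

lemma cls_in[simp]: "w \<noteq> [] \<Longrightarrow> cls w \<in> carrier FQ"
  using carrier_FQ by blast

lemma some_cls: "u \<noteq> [] \<Longrightarrow> (SOME x. x \<in> cls u) \<in> cls u"
  by (rule someI[of _ u]) (simp add: mem_cls)

lemma mult_cls: "u \<noteq> [] \<Longrightarrow> v \<noteq> [] \<Longrightarrow> cls u \<otimes>\<^bsub>FQ\<^esub> cls v = cls (u @ v)"
proof -
  assume u: "u \<noteq> []" and v: "v \<noteq> []"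
  define a where "a = (SOME x. x \<in> cls u)"
  define b where "b = (SOME x. x \<in> cls v)"
  have a: "a \<noteq> []" "nf u = nf a" using some_cls[OF u] unfolding a_def mem_cls by auto
  have b: "b \<noteq> []" "nf v = nf b" using some_cls[OF v] unfolding b_def mem_cls by auto
  have "cls u \<otimes>\<^bsub>FQ\<^esub> cls v = cls (a @ b)"
    unfolding FQ_def a_def b_def cls_def by simp
  also have "\<dots> = cls (u @ v)"
    using a b u v by (subst cls_eq) (auto intro: nf_cong)
  finally show ?thesis .
qed

lemma semigrp_FQ: "semigrp (FQ :: 'a tlet list set monoid)"
  unfolding semigrp_def
proof (intro conjI ballI)
  fix x y :: "'a tlet list set" assume "x \<in> carrier FQ" "y \<in> carrier FQ"
  then obtain u v where "u \<noteq> []" "v \<noteq> []" "x = cls u" "y = cls v" by (auto simp: carrier_FQ)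
  then show "x \<otimes>\<^bsub>FQ\<^esub> y \<in> carrier FQ" by (simp add: mult_cls)
next
  fix x y z :: "'a tlet list set" assume "x \<in> carrier FQ" "y \<in> carrier FQ" "z \<in> carrier FQ"
  then obtain u v w where "u \<noteq> []" "v \<noteq> []" "w \<noteq> []" "x = cls u" "y = cls v" "z = cls w"
    by (auto simp: carrier_FQ)
  then show "x \<otimes>\<^bsub>FQ\<^esub> y \<otimes>\<^bsub>FQ\<^esub> z = x \<otimes>\<^bsub>FQ\<^esub> (y \<otimes>\<^bsub>FQ\<^esub> z)" by (simp add: mult_cls)
qed

lemma absorb_right: "b \<noteq> [] \<Longrightarrow> nf (b @ [Wg s (tau b)]) = nf b"
proof -
  assume "b \<noteq> []"
  then obtain b0 l where b: "b = b0 @ [l]" by (metis rev_exhaust)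
  have "comb l (Wg s (last_lit l)) = Some l" by (cases l) auto
  then have "nf (b0 @ [l, Wg s (last_lit l)] @ []) = nf (b0 @ [l] @ [])" by (rule nf_comb)
  then show ?thesis using b by (simp add: tau_def)
qed

lemma simple_FQ: "sg_simple (FQ :: 'a tlet list set monoid)"
  unfolding sg_simple_def
proof (intro allI impI)
  fix I :: "'a tlet list set set" assume I: "sg_ideal FQ I"
  then obtain A where A: "A \<in> I" unfolding sg_ideal_def by blast
  then have "A \<in> carrier FQ" using I unfolding sg_ideal_def by blast
  then obtain a where a: "a \<noteq> []" "A = cls a" by (auto simp: carrier_FQ)
  have "carrier FQ \<subseteq> I"
  proof
    fix B :: "'a tlet list set" assume "B \<in> carrier FQ"
    then obtain b where b: "b \<noteq> []" "B = cls b" by (auto simp: carrier_FQ)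
    define q where "q = [Wg (tau a) (tau b)]"
    define c where "c = a @ q"
    have c: "c \<noteq> []" unfolding c_def q_def by simp
    obtain s where s: "nf (invw c @ c) = [Wg s (last_lit (last c))]" using invw_left[OF c] by blast
    have tc: "last_lit (last c) = tau b" unfolding c_def q_def by simp
    have ic: "invw c \<noteq> []" using c by (cases c rule: invw.cases) auto
    have "nf ((b @ invw c) @ a @ q) = nf (b @ (invw c @ c))" unfolding c_def by simp
    also have "\<dots> = nf (b @ [Wg s (tau b)])"
      using s tc nf_cong[of b b "invw c @ c" "[Wg s (tau b)]"] by simp
    also have "\<dots> = nf b" using absorb_right[OF b(1)] .
    finally have eq: "nf ((b @ invw c) @ a @ q) = nf b" .
    have "B = (cls (b @ invw c) \<otimes>\<^bsub>FQ\<^esub> A) \<otimes>\<^bsub>FQ\<^esub> cls q"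
      using a b eq by (simp add: mult_cls q_def cls_eq)
    moreover have "cls (b @ invw c) \<otimes>\<^bsub>FQ\<^esub> A \<in> I"
      using I A b unfolding sg_ideal_def by simp
    ultimately show "B \<in> I" using I unfolding sg_ideal_def by (simp add: q_def)
  qed
  then show "I = carrier FQ" using I unfolding sg_ideal_def by blast
qed

lemma primitive_FQ: "sg_primitive FQ (cls [Wg x x])"
  unfolding sg_primitive_def sg_idempotent_def
proof (intro conjI allI impI)
  show "cls [Wg x x] \<in> carrier FQ" by simp
  show "cls [Wg x x] \<otimes>\<^bsub>FQ\<^esub> cls [Wg x x] = cls [Wg x x]"
    by (simp add: mult_cls cls_eq nf_def)
next
  fix F assume H: "(F \<in> carrier FQ \<and> F \<otimes>\<^bsub>FQ\<^esub> F = F) \<and>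
    F = cls [Wg x x] \<otimes>\<^bsub>FQ\<^esub> F \<and> F = F \<otimes>\<^bsub>FQ\<^esub> cls [Wg x x]"
  define e where "e = [Wg x x]"
  from H have H1: "F \<in> carrier FQ" and H2: "F \<otimes>\<^bsub>FQ\<^esub> F = F"
    and H3: "cls e \<otimes>\<^bsub>FQ\<^esub> F = F" and H4: "F \<otimes>\<^bsub>FQ\<^esub> cls e = F"
    unfolding e_def by (blast, blast, metis, metis)
  obtain f where f: "f \<noteq> []" "F = cls f" using H1 carrier_FQ by blast
  have en: "e \<noteq> []" unfolding e_def by simp
  have h1: "cls (f @ f) = cls f" using H2 unfolding f(2) mult_cls[OF f(1) f(1)] .
  have h2: "cls (e @ f) = cls f" using H3 unfolding f(2) mult_cls[OF en f(1)] .
  have h3: "cls (f @ e) = cls f" using H4 unfolding f(2) mult_cls[OF f(1) en] .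
  have ff: "nf (f @ f) = nf f" using h1 f(1) cls_eq[of "f @ f" f] by simp
  have ef: "nf (e @ f) = nf f" using h2 f(1) en cls_eq[of "e @ f" f] by simp
  have fe: "nf (f @ e) = nf f" using h3 f(1) en cls_eq[of "f @ e" f] by simp
  have "iota f = iota (e @ f)" using ef iota_nf by metis
  then have if_: "first_lit (hd f) = x" by (simp add: iota_def e_def)
  obtain t where t: "nf (f @ invw f) = [Wg x t]" using invw_right[OF f(1)] if_ by auto
  have "nf (f @ invw f @ e) = nf ([Wg x t] @ e)"
    using nf_cong[of "f @ invw f" "[Wg x t]" e e] t by simp
  also have "\<dots> = nf ([] @ [Wg x t, Wg x x] @ [])" by (simp add: e_def)
  also have "\<dots> = nf ([] @ [Wg x x] @ [])" by (rule nf_comb) simp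
  finally have fge: "nf (f @ invw f @ e) = nf e" by (simp add: e_def)
  have "nf f = nf (f @ e)" using fe by simp
  also have "\<dots> = nf (f @ (f @ invw f @ e))" using nf_cong[of f f "f @ invw f @ e" e] fge by metis
  also have "\<dots> = nf ((f @ f) @ (invw f @ e))" by simp
  also have "\<dots> = nf (f @ (invw f @ e))" using nf_cong[OF ff] by blast
  also have "\<dots> = nf e" using fge by simp
  finally have "nf f = nf e" .
  then show "F = cls [Wg x x]" using f en cls_eq[of f e] unfolding e_def by simp
qed

lemma cs_FQ: "completely_simple (FQ :: 'a tlet list set monoid)"
  unfolding completely_simple_def
  using semigrp_FQ simple_FQ primitive_FQ cls_in[of "[Wg undefined undefined]"] by blast

lemma xi_cls: "xi y = cls [Lt y]"
  by (simp add: xi_def cls_def)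

lemma matched_FQ: "matched FQ xi"
  unfolding matched_def sg_inverse_def xi_cls
  by (simp add: mult_cls cls_eq nf_def)

lemma sgc[simp]: "semigrp S \<Longrightarrow> x \<in> carrier S \<Longrightarrow> y \<in> carrier S \<Longrightarrow> x \<otimes>\<^bsub>S\<^esub> y \<in> carrier S"
  unfolding semigrp_def by blast

lemma sga: "semigrp S \<Longrightarrow> x \<in> carrier S \<Longrightarrow> y \<in> carrier S \<Longrightarrow> z \<in> carrier S \<Longrightarrow>
  x \<otimes>\<^bsub>S\<^esub> y \<otimes>\<^bsub>S\<^esub> z = x \<otimes>\<^bsub>S\<^esub> (y \<otimes>\<^bsub>S\<^esub> z)"
  unfolding semigrp_def by blast

lemma ext2: "semigrp S \<Longrightarrow> a \<in> carrier S \<Longrightarrow> b \<in> carrier S \<Longrightarrow> a \<otimes>\<^bsub>S\<^esub> b = c \<Longrightarrow>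
  z \<in> carrier S \<Longrightarrow> a \<otimes>\<^bsub>S\<^esub> (b \<otimes>\<^bsub>S\<^esub> z) = c \<otimes>\<^bsub>S\<^esub> z"
  by (drule sym) (simp add: sga)

lemma ext3: "semigrp S \<Longrightarrow> a \<in> carrier S \<Longrightarrow> b \<in> carrier S \<Longrightarrow> d \<in> carrier S \<Longrightarrow>
  a \<otimes>\<^bsub>S\<^esub> (b \<otimes>\<^bsub>S\<^esub> d) = c \<Longrightarrow>
  z \<in> carrier S \<Longrightarrow> a \<otimes>\<^bsub>S\<^esub> (b \<otimes>\<^bsub>S\<^esub> (d \<otimes>\<^bsub>S\<^esub> z)) = c \<otimes>\<^bsub>S\<^esub> z"
  by (drule sym) (simp add: sga)

lemma ext4: "semigrp S \<Longrightarrow> a \<in> carrier S \<Longrightarrow> b \<in> carrier S \<Longrightarrow> d \<in> carrier S \<Longrightarrow> e \<in> carrier S \<Longrightarrow>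
  a \<otimes>\<^bsub>S\<^esub> (b \<otimes>\<^bsub>S\<^esub> (d \<otimes>\<^bsub>S\<^esub> e)) = c \<Longrightarrow>
  z \<in> carrier S \<Longrightarrow> a \<otimes>\<^bsub>S\<^esub> (b \<otimes>\<^bsub>S\<^esub> (d \<otimes>\<^bsub>S\<^esub> (e \<otimes>\<^bsub>S\<^esub> z))) = c \<otimes>\<^bsub>S\<^esub> z"
  by (drule sym) (simp add: sga)

lemma ext5: "semigrp S \<Longrightarrow> a \<in> carrier S \<Longrightarrow> b \<in> carrier S \<Longrightarrow> d \<in> carrier S \<Longrightarrow> e \<in> carrier S \<Longrightarrow>
  f \<in> carrier S \<Longrightarrow>
  a \<otimes>\<^bsub>S\<^esub> (b \<otimes>\<^bsub>S\<^esub> (d \<otimes>\<^bsub>S\<^esub> (e \<otimes>\<^bsub>S\<^esub> f))) = c \<Longrightarrow>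
  z \<in> carrier S \<Longrightarrow> a \<otimes>\<^bsub>S\<^esub> (b \<otimes>\<^bsub>S\<^esub> (d \<otimes>\<^bsub>S\<^esub> (e \<otimes>\<^bsub>S\<^esub> (f \<otimes>\<^bsub>S\<^esub> z)))) = c \<otimes>\<^bsub>S\<^esub> z"
  by (drule sym) (simp add: sga)

lemma SpS:
  assumes S: "semigrp S" "sg_simple S" and p: "p \<in> carrier S" and a: "a \<in> carrier S"
  shows "\<exists>x\<in>carrier S. \<exists>y\<in>carrier S. x \<otimes>\<^bsub>S\<^esub> (p \<otimes>\<^bsub>S\<^esub> y) = a"
proof -
  let ?I = "{s \<in> carrier S. \<exists>x\<in>carrier S. \<exists>y\<in>carrier S. x \<otimes>\<^bsub>S\<^esub> (p \<otimes>\<^bsub>S\<^esub> y) = s}"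
  have sub: "?I \<subseteq> carrier S" by blast
  have "p \<otimes>\<^bsub>S\<^esub> (p \<otimes>\<^bsub>S\<^esub> p) \<in> carrier S" using p S by simp
  then have "p \<otimes>\<^bsub>S\<^esub> (p \<otimes>\<^bsub>S\<^esub> p) \<in> ?I" using p by blast
  then have ne: "?I \<noteq> {}" by blast
  have cl: "s \<otimes>\<^bsub>S\<^esub> i \<in> ?I \<and> i \<otimes>\<^bsub>S\<^esub> s \<in> ?I" if s: "s \<in> carrier S" and i: "i \<in> ?I" for s i
  proof -
    from i obtain x y where xy: "x \<in> carrier S" "y \<in> carrier S" "x \<otimes>\<^bsub>S\<^esub> (p \<otimes>\<^bsub>S\<^esub> y) = i" by blast
    have e1: "(s \<otimes>\<^bsub>S\<^esub> x) \<otimes>\<^bsub>S\<^esub> (p \<otimes>\<^bsub>S\<^esub> y) = s \<otimes>\<^bsub>S\<^esub> i"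
      unfolding xy(3)[symmetric] using xy(1,2) s p S by (simp add: sga)
    have e2: "x \<otimes>\<^bsub>S\<^esub> (p \<otimes>\<^bsub>S\<^esub> (y \<otimes>\<^bsub>S\<^esub> s)) = i \<otimes>\<^bsub>S\<^esub> s"
      unfolding xy(3)[symmetric] using xy(1,2) s p S by (simp add: sga)
    have c: "s \<otimes>\<^bsub>S\<^esub> i \<in> carrier S" "i \<otimes>\<^bsub>S\<^esub> s \<in> carrier S"
      "s \<otimes>\<^bsub>S\<^esub> x \<in> carrier S" "y \<otimes>\<^bsub>S\<^esub> s \<in> carrier S"
      using s i xy S by auto
    have "s \<otimes>\<^bsub>S\<^esub> i \<in> ?I"
      using c(1) e1 by (intro CollectI conjI bexI[OF _ c(3)] bexI[OF _ xy(2)])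
    moreover have "i \<otimes>\<^bsub>S\<^esub> s \<in> ?I"
      using c(2) e2 by (intro CollectI conjI bexI[OF _ xy(1)] bexI[OF _ c(4)])
    ultimately show ?thesis by blast
  qed
  have "sg_ideal S ?I" unfolding sg_ideal_def using sub ne cl by blast
  then have "?I = carrier S" using S(2) unfolding sg_simple_def by blast
  then show ?thesis using a by blast
qed

lemma all_prim:
  assumes S: "semigrp S" "sg_simple S" and p: "sg_primitive S p" and e: "sg_idempotent S e"
  shows "sg_primitive S e"
  unfolding sg_primitive_def
proof (intro conjI e allI impI)
  fix h assume h: "sg_idempotent S h \<and> h = e \<otimes>\<^bsub>S\<^esub> h \<and> h = h \<otimes>\<^bsub>S\<^esub> e"
  have pc: "p \<in> carrier S" and pp: "p \<otimes>\<^bsub>S\<^esub> p = p" using p unfolding sg_primitive_def sg_idempotent_def by auto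
  have ec: "e \<in> carrier S" and ee: "e \<otimes>\<^bsub>S\<^esub> e = e" using e unfolding sg_idempotent_def by auto
  have hc: "h \<in> carrier S" and hh: "h \<otimes>\<^bsub>S\<^esub> h = h"
    using h unfolding sg_idempotent_def by auto
  have eh: "e \<otimes>\<^bsub>S\<^esub> h = h" using h by (elim conjE) (rule sym)
  have he: "h \<otimes>\<^bsub>S\<^esub> e = h" using h by (elim conjE) (rule sym)
  obtain x y where xy: "x \<in> carrier S" "y \<in> carrier S" and exy: "x \<otimes>\<^bsub>S\<^esub> (p \<otimes>\<^bsub>S\<^esub> y) = e"
    using SpS[OF S pc ec] by blast
  note R = sga[OF S(1)] ext2[OF S(1)] ext3[OF S(1)] ext4[OF S(1)] ext5[OF S(1)]
  note C = pc ec hc xy S(1)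
  note pp' = ext2[OF S(1) pc pc pp] and ee' = ext2[OF S(1) ec ec ee]
  note hh' = ext2[OF S(1) hc hc hh] and eh' = ext2[OF S(1) ec hc eh] and he' = ext2[OF S(1) hc ec he]
  note exy' = ext3[OF S(1) xy(1) pc xy(2) exy]
  define c where "c = p \<otimes>\<^bsub>S\<^esub> (y \<otimes>\<^bsub>S\<^esub> (h \<otimes>\<^bsub>S\<^esub> (x \<otimes>\<^bsub>S\<^esub> p)))"
  have cc: "c \<in> carrier S" unfolding c_def using C by simp
  have "c \<otimes>\<^bsub>S\<^esub> c = c" unfolding c_def using C
    by (simp add: sga pp pp' ee ee' hh hh' eh eh' he he' exy exy')
  moreover have "c = p \<otimes>\<^bsub>S\<^esub> c" unfolding c_def using C by (simp add: sga pp')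
  moreover have "c = c \<otimes>\<^bsub>S\<^esub> p" unfolding c_def using C by (simp add: sga pp pp')
  ultimately have "c = p" using p cc unfolding sg_primitive_def sg_idempotent_def by blast
  have 1: "e \<otimes>\<^bsub>S\<^esub> (x \<otimes>\<^bsub>S\<^esub> p) \<otimes>\<^bsub>S\<^esub> (c \<otimes>\<^bsub>S\<^esub> (p \<otimes>\<^bsub>S\<^esub> (y \<otimes>\<^bsub>S\<^esub> e))) = h"
    unfolding c_def using C by (simp add: sga pp pp' ee ee' hh hh' eh eh' he he' exy exy')
  have 2: "e \<otimes>\<^bsub>S\<^esub> (x \<otimes>\<^bsub>S\<^esub> p) \<otimes>\<^bsub>S\<^esub> (p \<otimes>\<^bsub>S\<^esub> (p \<otimes>\<^bsub>S\<^esub> (y \<otimes>\<^bsub>S\<^esub> e))) = e"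
    using C by (simp add: sga pp pp' ee ee' hh hh' eh eh' he he' exy exy')
  show "h = e" using 1 2 \<open>c = p\<close> by simp
qed

lemma group_inv:
  assumes S: "semigrp S" "sg_simple S" and p: "sg_primitive S p" and a: "a \<in> carrier S"
    and pa: "p \<otimes>\<^bsub>S\<^esub> a = a" and ap: "a \<otimes>\<^bsub>S\<^esub> p = a"
  shows "\<exists>k\<in>carrier S. a \<otimes>\<^bsub>S\<^esub> k = p \<and> k \<otimes>\<^bsub>S\<^esub> a = p \<and> p \<otimes>\<^bsub>S\<^esub> k = k \<and> k \<otimes>\<^bsub>S\<^esub> p = k"
proof -
  have pc: "p \<in> carrier S" and pp: "p \<otimes>\<^bsub>S\<^esub> p = p" using p unfolding sg_primitive_def sg_idempotent_def by auto
  obtain x y where xy: "x \<in> carrier S" "y \<in> carrier S" and xay: "x \<otimes>\<^bsub>S\<^esub> (a \<otimes>\<^bsub>S\<^esub> y) = p"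
    using SpS[OF S a pc] by blast
  note C = pc a xy S(1)
  note pp' = ext2[OF S(1) pc pc pp] and pa' = ext2[OF S(1) pc a pa] and ap' = ext2[OF S(1) a pc ap]
  note xay' = ext3[OF S(1) xy(1) a xy(2) xay]
  note simps = sga pp pp' pa pa' ap ap' xay xay'
  define g1 where "g1 = a \<otimes>\<^bsub>S\<^esub> (y \<otimes>\<^bsub>S\<^esub> (p \<otimes>\<^bsub>S\<^esub> (x \<otimes>\<^bsub>S\<^esub> p)))"
  define g2 where "g2 = p \<otimes>\<^bsub>S\<^esub> (y \<otimes>\<^bsub>S\<^esub> (p \<otimes>\<^bsub>S\<^esub> (x \<otimes>\<^bsub>S\<^esub> a)))"
  have "g1 \<in> carrier S" "g1 \<otimes>\<^bsub>S\<^esub> g1 = g1" "g1 = p \<otimes>\<^bsub>S\<^esub> g1" "g1 = g1 \<otimes>\<^bsub>S\<^esub> p"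
    unfolding g1_def using C by (simp_all add: simps)
  then have g1: "g1 = p" using p unfolding sg_primitive_def sg_idempotent_def by blast
  have "g2 \<in> carrier S" "g2 \<otimes>\<^bsub>S\<^esub> g2 = g2" "g2 = p \<otimes>\<^bsub>S\<^esub> g2" "g2 = g2 \<otimes>\<^bsub>S\<^esub> p"
    unfolding g2_def using C by (simp_all add: simps)
  then have g2: "g2 = p" using p unfolding sg_primitive_def sg_idempotent_def by blast
  define k where "k = p \<otimes>\<^bsub>S\<^esub> (y \<otimes>\<^bsub>S\<^esub> (p \<otimes>\<^bsub>S\<^esub> (x \<otimes>\<^bsub>S\<^esub> p)))"
  have "a \<otimes>\<^bsub>S\<^esub> k = g1" "k \<otimes>\<^bsub>S\<^esub> a = g2" "p \<otimes>\<^bsub>S\<^esub> k = k" "k \<otimes>\<^bsub>S\<^esub> p = k" "k \<in> carrier S"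
    unfolding k_def g1_def g2_def using C by (simp_all add: simps)
  then show ?thesis using g1 g2 by blast
qed

lemma E_exists:
  assumes S: "completely_simple S" and e: "sg_idempotent S e" and f: "sg_idempotent S f"
  shows "\<exists>g\<in>carrier S. e \<otimes>\<^bsub>S\<^esub> g = g \<and> g \<otimes>\<^bsub>S\<^esub> e = e \<and> g \<otimes>\<^bsub>S\<^esub> f = g \<and> f \<otimes>\<^bsub>S\<^esub> g = f"
proof -
  have S1: "semigrp S" and S2: "sg_simple S" using S unfolding completely_simple_def by auto
  obtain p where p: "sg_primitive S p" using S unfolding completely_simple_def by auto
  have ep: "sg_primitive S e" by (rule all_prim[OF S1 S2 p e])
  have fp: "sg_primitive S f" by (rule all_prim[OF S1 S2 p f])
  have ec: "e \<in> carrier S" and ee: "e \<otimes>\<^bsub>S\<^esub> e = e" using e unfolding sg_idempotent_def by auto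
  have fc: "f \<in> carrier S" and ff: "f \<otimes>\<^bsub>S\<^esub> f = f" using f unfolding sg_idempotent_def by auto
  note ee' = ext2[OF S1 ec ec ee] and ff' = ext2[OF S1 fc fc ff]
  define a where "a = f \<otimes>\<^bsub>S\<^esub> (e \<otimes>\<^bsub>S\<^esub> f)"
  have ac: "a \<in> carrier S" unfolding a_def using S1 ec fc by simp
  have fa: "f \<otimes>\<^bsub>S\<^esub> a = a" unfolding a_def using S1 ec fc by (simp add: ff')
  have af: "a \<otimes>\<^bsub>S\<^esub> f = a" unfolding a_def using S1 ec fc by (simp add: sga ff ff')
  obtain k where kc: "k \<in> carrier S" and ak: "a \<otimes>\<^bsub>S\<^esub> k = f" and ka: "k \<otimes>\<^bsub>S\<^esub> a = f"
    and fk: "f \<otimes>\<^bsub>S\<^esub> k = k" and kf: "k \<otimes>\<^bsub>S\<^esub> f = k"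
    using group_inv[OF S1 S2 fp ac fa af] by blast
  note kf' = ext2[OF S1 kc fc kf]
  have fek: "f \<otimes>\<^bsub>S\<^esub> (e \<otimes>\<^bsub>S\<^esub> k) = f" using ak unfolding a_def using S1 ec fc kc by (simp add: sga fk)
  have kef: "k \<otimes>\<^bsub>S\<^esub> (e \<otimes>\<^bsub>S\<^esub> f) = f" using ka unfolding a_def using S1 ec fc kc by (simp add: sga kf')
  have kek: "k \<otimes>\<^bsub>S\<^esub> (e \<otimes>\<^bsub>S\<^esub> k) = k"
  proof -
    have "k \<otimes>\<^bsub>S\<^esub> (e \<otimes>\<^bsub>S\<^esub> k) = k \<otimes>\<^bsub>S\<^esub> (e \<otimes>\<^bsub>S\<^esub> (f \<otimes>\<^bsub>S\<^esub> k))" using fk by simp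
    also have "\<dots> = (k \<otimes>\<^bsub>S\<^esub> (e \<otimes>\<^bsub>S\<^esub> f)) \<otimes>\<^bsub>S\<^esub> k" using S1 ec fc kc by (simp add: sga)
    also have "\<dots> = k" using kef fk by simp
    finally show ?thesis .
  qed
  note kek' = ext3[OF S1 kc ec kc kek]
  define g where "g = e \<otimes>\<^bsub>S\<^esub> k"
  have gc: "g \<in> carrier S" unfolding g_def using S1 ec kc by simp
  have eg: "e \<otimes>\<^bsub>S\<^esub> g = g" unfolding g_def using S1 ec kc by (simp add: ee')
  have gf: "g \<otimes>\<^bsub>S\<^esub> f = g" unfolding g_def using S1 ec kc fc by (simp add: sga kf)
  have fg: "f \<otimes>\<^bsub>S\<^esub> g = f" unfolding g_def using fek .
  define h where "h = e \<otimes>\<^bsub>S\<^esub> (k \<otimes>\<^bsub>S\<^esub> e)"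
  have "h \<in> carrier S" "h \<otimes>\<^bsub>S\<^esub> h = h" "h = e \<otimes>\<^bsub>S\<^esub> h" "h = h \<otimes>\<^bsub>S\<^esub> e"
    unfolding h_def using S1 ec kc by (simp_all add: sga ee ee' kek kek')
  then have "h = e" using ep unfolding sg_primitive_def sg_idempotent_def by blast
  then have ge: "g \<otimes>\<^bsub>S\<^esub> e = e" unfolding g_def h_def using S1 ec kc by (simp add: sga)
  show ?thesis using gc eg ge gf fg by blast
qed

definition Pw :: "('b, 'c) monoid_scheme \<Rightarrow> 'b \<Rightarrow> 'b \<Rightarrow> 'b \<Rightarrow> bool" where
  "Pw S g a b \<longleftrightarrow> g \<in> carrier S \<and> g \<otimes>\<^bsub>S\<^esub> g = g \<and> g \<otimes>\<^bsub>S\<^esub> a = a \<and>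
     (\<exists>s\<in>carrier S. g = a \<otimes>\<^bsub>S\<^esub> s) \<and> b \<otimes>\<^bsub>S\<^esub> g = b \<and> (\<exists>t\<in>carrier S. g = t \<otimes>\<^bsub>S\<^esub> b)"

lemma Pw_unique:
  assumes S: "semigrp S" and a: "a \<in> carrier S" and b: "b \<in> carrier S"
    and g: "Pw S g a b" and h: "Pw S h a b"
  shows "g = h"
proof -
  obtain s where s: "s \<in> carrier S" "h = a \<otimes>\<^bsub>S\<^esub> s" using h unfolding Pw_def by blast
  obtain t where t: "t \<in> carrier S" "g = t \<otimes>\<^bsub>S\<^esub> b" using g unfolding Pw_def by blast
  have gc: "g \<in> carrier S" and ga: "g \<otimes>\<^bsub>S\<^esub> a = a" using g unfolding Pw_def by auto
  have hc: "h \<in> carrier S" and bh: "b \<otimes>\<^bsub>S\<^esub> h = b" using h unfolding Pw_def by auto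
  have "g \<otimes>\<^bsub>S\<^esub> h = (g \<otimes>\<^bsub>S\<^esub> a) \<otimes>\<^bsub>S\<^esub> s" using s gc a S by (simp add: sga)
  also have "\<dots> = h" using ga s by simp
  finally have 1: "g \<otimes>\<^bsub>S\<^esub> h = h" .
  have "g \<otimes>\<^bsub>S\<^esub> h = t \<otimes>\<^bsub>S\<^esub> (b \<otimes>\<^bsub>S\<^esub> h)" using t hc b S by (simp add: sga)
  also have "\<dots> = g" using bh t by simp
  finally show ?thesis using 1 by simp
qed

lemma Pw_exists:
  assumes S: "completely_simple S" and ia: "sg_inverse S a a'" and ib: "sg_inverse S b b'"
  shows "\<exists>g. Pw S g a b"
proof -
  have S1: "semigrp S" using S unfolding completely_simple_def by auto
  have ac: "a \<in> carrier S" and a'c: "a' \<in> carrier S" and aa: "a \<otimes>\<^bsub>S\<^esub> (a' \<otimes>\<^bsub>S\<^esub> a) = a"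
    and a'a: "a' \<otimes>\<^bsub>S\<^esub> (a \<otimes>\<^bsub>S\<^esub> a') = a'"
    using ia S1 unfolding sg_inverse_def by (auto simp: sga)
  have bc: "b \<in> carrier S" and b'c: "b' \<in> carrier S" and bb: "b \<otimes>\<^bsub>S\<^esub> (b' \<otimes>\<^bsub>S\<^esub> b) = b"
    and b'b: "b' \<otimes>\<^bsub>S\<^esub> (b \<otimes>\<^bsub>S\<^esub> b') = b'"
    using ib S1 unfolding sg_inverse_def by (auto simp: sga)
  note aa' = ext3[OF S1 ac a'c ac aa] and b'b' = ext3[OF S1 b'c bc b'c b'b]
  have ie: "sg_idempotent S (a \<otimes>\<^bsub>S\<^esub> a')" unfolding sg_idempotent_def
    using S1 ac a'c by (simp add: sga aa')
  have if_: "sg_idempotent S (b' \<otimes>\<^bsub>S\<^esub> b)" unfolding sg_idempotent_def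
    using S1 bc b'c by (simp add: sga b'b')
  obtain g where gc: "g \<in> carrier S" and eg: "(a \<otimes>\<^bsub>S\<^esub> a') \<otimes>\<^bsub>S\<^esub> g = g"
    and ge: "g \<otimes>\<^bsub>S\<^esub> (a \<otimes>\<^bsub>S\<^esub> a') = a \<otimes>\<^bsub>S\<^esub> a'"
    and gf: "g \<otimes>\<^bsub>S\<^esub> (b' \<otimes>\<^bsub>S\<^esub> b) = g" and fg: "(b' \<otimes>\<^bsub>S\<^esub> b) \<otimes>\<^bsub>S\<^esub> g = b' \<otimes>\<^bsub>S\<^esub> b"
    using E_exists[OF S ie if_] by blast
  have "g \<otimes>\<^bsub>S\<^esub> g = g \<otimes>\<^bsub>S\<^esub> ((a \<otimes>\<^bsub>S\<^esub> a') \<otimes>\<^bsub>S\<^esub> g)" using eg by simp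
  also have "\<dots> = (g \<otimes>\<^bsub>S\<^esub> (a \<otimes>\<^bsub>S\<^esub> a')) \<otimes>\<^bsub>S\<^esub> g" using S1 ac a'c gc by (simp add: sga)
  also have "\<dots> = g" using ge eg by simp
  finally have gg: "g \<otimes>\<^bsub>S\<^esub> g = g" .
  have "g \<otimes>\<^bsub>S\<^esub> a = g \<otimes>\<^bsub>S\<^esub> (a \<otimes>\<^bsub>S\<^esub> (a' \<otimes>\<^bsub>S\<^esub> a))" using aa by simp
  also have "\<dots> = (g \<otimes>\<^bsub>S\<^esub> (a \<otimes>\<^bsub>S\<^esub> a')) \<otimes>\<^bsub>S\<^esub> a" using S1 ac a'c gc by (simp add: sga)
  also have "\<dots> = a" using ge aa S1 ac a'c by (simp add: sga)
  finally have ga: "g \<otimes>\<^bsub>S\<^esub> a = a" .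
  have g1: "g = a \<otimes>\<^bsub>S\<^esub> (a' \<otimes>\<^bsub>S\<^esub> g)" using eg S1 ac a'c gc by (simp add: sga)
  have "b \<otimes>\<^bsub>S\<^esub> g = (b \<otimes>\<^bsub>S\<^esub> (b' \<otimes>\<^bsub>S\<^esub> b)) \<otimes>\<^bsub>S\<^esub> g" using bb by simp
  also have "\<dots> = b \<otimes>\<^bsub>S\<^esub> ((b' \<otimes>\<^bsub>S\<^esub> b) \<otimes>\<^bsub>S\<^esub> g)" using S1 bc b'c gc by (simp add: sga)
  also have "\<dots> = b" using fg bb by simp
  finally have bg: "b \<otimes>\<^bsub>S\<^esub> g = b" .
  have g2: "g = (g \<otimes>\<^bsub>S\<^esub> b') \<otimes>\<^bsub>S\<^esub> b" using gf S1 bc b'c gc by (simp add: sga)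
  have "Pw S g a b" unfolding Pw_def
  proof (intro conjI)
    show "\<exists>s\<in>carrier S. g = a \<otimes>\<^bsub>S\<^esub> s" using g1 S1 a'c gc by (intro bexI[of _ "a' \<otimes>\<^bsub>S\<^esub> g"]) auto
    show "\<exists>t\<in>carrier S. g = t \<otimes>\<^bsub>S\<^esub> b" using g2 S1 b'c gc by (intro bexI[of _ "g \<otimes>\<^bsub>S\<^esub> b'"]) auto
  qed (use gc gg ga bg in auto)
  then show ?thesis by blast
qed

definition Ew :: "('b, 'c) monoid_scheme \<Rightarrow> 'b \<Rightarrow> 'b \<Rightarrow> 'b" where
  "Ew S a b = (SOME g. Pw S g a b)"

fun val :: "('b, 'c) monoid_scheme \<Rightarrow> ('a lit \<Rightarrow> 'b) \<Rightarrow> 'a tlet \<Rightarrow> 'b" where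
  "val S \<nu> (Lt x) = \<nu> x"
| "val S \<nu> (Wg x y) = Ew S (\<nu> x) (\<nu> y)"

fun phi0 :: "('b, 'c) monoid_scheme \<Rightarrow> ('a lit \<Rightarrow> 'b) \<Rightarrow> 'a tlet list \<Rightarrow> 'b" where
  "phi0 S \<nu> [] = undefined"
| "phi0 S \<nu> [a] = val S \<nu> a"
| "phi0 S \<nu> (a # b # w) = val S \<nu> a \<otimes>\<^bsub>S\<^esub> phi0 S \<nu> (b # w)"

definition phiQ :: "('b, 'c) monoid_scheme \<Rightarrow> ('a lit \<Rightarrow> 'b) \<Rightarrow> 'a tlet list set \<Rightarrow> 'b" where
  "phiQ S \<nu> A = phi0 S \<nu> (SOME u. u \<in> A)"

lemma inv_lit:
  assumes "matched S \<nu>" shows "sg_inverse S (\<nu> z) (\<nu> (lprime z))"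
  using assms unfolding matched_def sg_inverse_def by (cases z) auto

lemma nu_in: "matched S \<nu> \<Longrightarrow> \<nu> z \<in> carrier S"
  using inv_lit unfolding sg_inverse_def by blast

lemma Pw_E:
  assumes S: "completely_simple S" and m: "matched S \<nu>"
  shows "Pw S (Ew S (\<nu> x) (\<nu> y)) (\<nu> x) (\<nu> y)"
  unfolding Ew_def
  by (rule someI_ex) (rule Pw_exists[OF S inv_lit[OF m] inv_lit[OF m]])

lemma val_in:
  assumes S: "completely_simple S" and m: "matched S \<nu>"
  shows "val S \<nu> a \<in> carrier S"
  using Pw_E[OF S m] nu_in[OF m] by (cases a) (auto simp: Pw_def)

lemma val_comb:
  assumes S: "completely_simple S" and m: "matched S \<nu>" and c: "comb a b = Some c"
  shows "val S \<nu> a \<otimes>\<^bsub>S\<^esub> val S \<nu> b = val S \<nu> c"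
proof -
  have S1: "semigrp S" using S unfolding completely_simple_def by auto
  note nu = nu_in[OF m] and PE = Pw_E[OF S m]
  show ?thesis
  proof (cases a; cases b)
    fix x y assume ab: "a = Lt x" "b = Lt y"
    with c have xy: "x = lprime y" "c = Wg x y" by (auto split: if_splits)
    have inv: "sg_inverse S (\<nu> y) (\<nu> x)" using inv_lit[OF m, of y] xy by simp
    then have yxy: "\<nu> y \<otimes>\<^bsub>S\<^esub> \<nu> x \<otimes>\<^bsub>S\<^esub> \<nu> y = \<nu> y" and xyx: "\<nu> x \<otimes>\<^bsub>S\<^esub> \<nu> y \<otimes>\<^bsub>S\<^esub> \<nu> x = \<nu> x"
      unfolding sg_inverse_def by auto
    have "Pw S (\<nu> x \<otimes>\<^bsub>S\<^esub> \<nu> y) (\<nu> x) (\<nu> y)" unfolding Pw_def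
    proof (intro conjI)
      show "\<nu> x \<otimes>\<^bsub>S\<^esub> \<nu> y \<in> carrier S" using S1 nu by simp
      show "\<nu> x \<otimes>\<^bsub>S\<^esub> \<nu> y \<otimes>\<^bsub>S\<^esub> (\<nu> x \<otimes>\<^bsub>S\<^esub> \<nu> y) = \<nu> x \<otimes>\<^bsub>S\<^esub> \<nu> y"
        using xyx S1 nu by (metis sga sgc)
      show "\<nu> x \<otimes>\<^bsub>S\<^esub> \<nu> y \<otimes>\<^bsub>S\<^esub> \<nu> x = \<nu> x" by (rule xyx)
      show "\<exists>s\<in>carrier S. \<nu> x \<otimes>\<^bsub>S\<^esub> \<nu> y = \<nu> x \<otimes>\<^bsub>S\<^esub> s" using nu by blast
      show "\<nu> y \<otimes>\<^bsub>S\<^esub> (\<nu> x \<otimes>\<^bsub>S\<^esub> \<nu> y) = \<nu> y" using yxy S1 nu by (simp add: sga)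
      show "\<exists>t\<in>carrier S. \<nu> x \<otimes>\<^bsub>S\<^esub> \<nu> y = t \<otimes>\<^bsub>S\<^esub> \<nu> y" using nu by blast
    qed
    then show ?thesis using Pw_unique[OF S1 nu nu _ PE[of x y]] ab xy by simp
  next
    fix x y z assume ab: "a = Lt x" "b = Wg y z"
    with c have "z = x" "c = Lt x" by (auto split: if_splits)
    then show ?thesis using ab PE[of y x] unfolding Pw_def by simp
  next
    fix x y z assume ab: "a = Wg x y" "b = Lt z"
    with c have "z = x" "c = Lt x" by (auto split: if_splits)
    then show ?thesis using ab PE[of x y] unfolding Pw_def by simp
  next
    fix x y z w assume ab: "a = Wg x y" "b = Wg z w"
    have P1: "Ew S (\<nu> x) (\<nu> y) \<in> carrier S" using PE unfolding Pw_def by blast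
    show ?thesis
    proof (cases "x = z")
      case True
      with c ab have cc: "c = Wg x w" by auto
      obtain s where s: "s \<in> carrier S" "Ew S (\<nu> x) (\<nu> w) = \<nu> x \<otimes>\<^bsub>S\<^esub> s"
        using PE[of x w] unfolding Pw_def by blast
      have ga: "Ew S (\<nu> x) (\<nu> y) \<otimes>\<^bsub>S\<^esub> \<nu> x = \<nu> x" using PE[of x y] unfolding Pw_def by blast
      have "Ew S (\<nu> x) (\<nu> y) \<otimes>\<^bsub>S\<^esub> Ew S (\<nu> x) (\<nu> w) = (Ew S (\<nu> x) (\<nu> y) \<otimes>\<^bsub>S\<^esub> \<nu> x) \<otimes>\<^bsub>S\<^esub> s"
        unfolding s(2) using S1 P1 nu s(1) by (simp add: sga)
      also have "\<dots> = Ew S (\<nu> x) (\<nu> w)" using ga s by simp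
      finally show ?thesis using ab cc True by simp
    next
      case False
      with c ab have yw: "y = w" and cc: "c = Wg x y" by (auto split: if_splits)
      obtain t where t: "t \<in> carrier S" "Ew S (\<nu> x) (\<nu> y) = t \<otimes>\<^bsub>S\<^esub> \<nu> y"
        using PE[of x y] unfolding Pw_def by blast
      have bg: "\<nu> y \<otimes>\<^bsub>S\<^esub> Ew S (\<nu> z) (\<nu> y) = \<nu> y" using PE[of z y] unfolding Pw_def by blast
      have P2: "Ew S (\<nu> z) (\<nu> y) \<in> carrier S" using PE unfolding Pw_def by blast
      have "Ew S (\<nu> x) (\<nu> y) \<otimes>\<^bsub>S\<^esub> Ew S (\<nu> z) (\<nu> y) = t \<otimes>\<^bsub>S\<^esub> (\<nu> y \<otimes>\<^bsub>S\<^esub> Ew S (\<nu> z) (\<nu> y))"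
        unfolding t(2) using S1 P2 nu t(1) by (simp add: sga)
      also have "\<dots> = Ew S (\<nu> x) (\<nu> y)" using bg t by simp
      finally show ?thesis using ab cc yw by simp
    qed
  qed
qed

context
  fixes S :: "('b, 'c) monoid_scheme" and \<nu> :: "'a lit \<Rightarrow> 'b"
  assumes S: "completely_simple S" and m: "matched S \<nu>"
begin

lemma S1: "semigrp S" using S unfolding completely_simple_def by auto

lemma phi0_in: "w \<noteq> [] \<Longrightarrow> phi0 S \<nu> w \<in> carrier S"
proof (induction w)
  case Nil then show ?case by simp
next
  case (Cons a w)
  then show ?case using val_in[OF S m] S1 by (cases w) auto
qed

lemma phi0_cons: "w \<noteq> [] \<Longrightarrow> phi0 S \<nu> (a # w) = val S \<nu> a \<otimes>\<^bsub>S\<^esub> phi0 S \<nu> w"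
  by (cases w) auto

lemma phi0_app: "u \<noteq> [] \<Longrightarrow> v \<noteq> [] \<Longrightarrow> phi0 S \<nu> (u @ v) = phi0 S \<nu> u \<otimes>\<^bsub>S\<^esub> phi0 S \<nu> v"
proof (induction u)
  case Nil then show ?case by simp
next
  case (Cons a u)
  show ?case
  proof (cases "u = []")
    case True then show ?thesis using Cons by (simp add: phi0_cons)
  next
    case False
    then show ?thesis using Cons
      by (simp add: phi0_cons sga[OF S1] val_in[OF S m] phi0_in)
  qed
qed

lemma phi0_step:
  assumes c: "comb a b = Some c"
  shows "phi0 S \<nu> (u @ [a, b] @ v) = phi0 S \<nu> (u @ [c] @ v)"
proof (induction u)
  case Nil
  show ?case
  proof (cases "v = []")
    case True then show ?thesis using val_comb[OF S m c] by simp
  next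
    case False
    have "phi0 S \<nu> (a # b # v) = val S \<nu> a \<otimes>\<^bsub>S\<^esub> (val S \<nu> b \<otimes>\<^bsub>S\<^esub> phi0 S \<nu> v)"
      using False by (simp add: phi0_cons)
    also have "\<dots> = (val S \<nu> a \<otimes>\<^bsub>S\<^esub> val S \<nu> b) \<otimes>\<^bsub>S\<^esub> phi0 S \<nu> v"
      using False by (simp add: sga[OF S1] val_in[OF S m] phi0_in)
    also have "\<dots> = phi0 S \<nu> (c # v)" using val_comb[OF S m c] False by (simp add: phi0_cons)
    finally show ?thesis by simp
  qed
next
  case (Cons x u)
  then show ?case by (simp add: phi0_cons)
qed

lemma phi0_red1s: "(s, t) \<in> red1\<^sup>* \<Longrightarrow> phi0 S \<nu> s = phi0 S \<nu> t"
proof (induction rule: rtrancl_induct)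
  case base then show ?case by simp
next
  case (step y z)
  then obtain u v a b c where "y = u @ [a, b] @ v" "z = u @ [c] @ v" "comb a b = Some c"
    using red1_comb by blast
  then show ?case using step phi0_step by simp
qed

lemma phi0_nf: "nf u = nf v \<Longrightarrow> phi0 S \<nu> u = phi0 S \<nu> v"
  using phi0_red1s[OF nf_reach[of u]] phi0_red1s[OF nf_reach[of v]] by simp

lemma phiQ_cls: "w \<noteq> [] \<Longrightarrow> phiQ S \<nu> (cls w) = phi0 S \<nu> w"
  unfolding phiQ_def using some_cls[of w] by (auto simp: mem_cls intro: phi0_nf)

lemma phiQ_hom: "phiQ S \<nu> \<in> hom FQ S"
proof (rule homI)
  fix A :: "'a tlet list set" assume "A \<in> carrier FQ"
  then obtain w where "w \<noteq> []" "A = cls w" by (auto simp: carrier_FQ)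
  then show "phiQ S \<nu> A \<in> carrier S" by (simp add: phiQ_cls phi0_in)
next
  fix A B :: "'a tlet list set" assume "A \<in> carrier FQ" "B \<in> carrier FQ"
  then obtain u v where "u \<noteq> []" "A = cls u" "v \<noteq> []" "B = cls v" by (auto simp: carrier_FQ)
  then show "phiQ S \<nu> (A \<otimes>\<^bsub>FQ\<^esub> B) = phiQ S \<nu> A \<otimes>\<^bsub>S\<^esub> phiQ S \<nu> B"
    by (simp add: mult_cls phiQ_cls phi0_app)
qed

lemma phiQ_xi: "phiQ S \<nu> (xi y) = \<nu> y"
  by (simp add: xi_cls phiQ_cls)

lemma uniq_letter:
  assumes psi: "\<psi> \<in> hom FQ S" and px: "\<forall>y. \<psi> (xi y) = \<nu> y"
  shows "\<psi> (cls [a]) = val S \<nu> a"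
proof (cases a)
  case (Lt y) then show ?thesis using px by (simp add: xi_cls)
next
  case (Wg x y)
  define W where "W = cls [Wg x y]"
  have Pc: "\<psi> A \<in> carrier S" if "A \<in> carrier FQ" for A using psi that unfolding hom_def by auto
  have Pm: "\<psi> (A \<otimes>\<^bsub>FQ\<^esub> B) = \<psi> A \<otimes>\<^bsub>S\<^esub> \<psi> B" if "A \<in> carrier FQ" "B \<in> carrier FQ" for A B
    using psi that unfolding hom_def by auto
  have Wc: "W \<in> carrier FQ" unfolding W_def by simp
  have m1: "W \<otimes>\<^bsub>FQ\<^esub> W = W" unfolding W_def by (simp add: mult_cls cls_eq nf_def)
  have m2: "W \<otimes>\<^bsub>FQ\<^esub> xi x = xi x" unfolding W_def xi_cls by (simp add: mult_cls cls_eq nf_def)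
  have m3: "xi x \<otimes>\<^bsub>FQ\<^esub> cls [Lt (lprime x), Wg x y] = W"
    unfolding W_def xi_cls by (simp add: mult_cls cls_eq nf_def)
  have m4: "xi y \<otimes>\<^bsub>FQ\<^esub> W = xi y" unfolding W_def xi_cls by (simp add: mult_cls cls_eq nf_def)
  have m5: "cls [Wg x y, Lt (lprime y)] \<otimes>\<^bsub>FQ\<^esub> xi y = W"
    unfolding W_def xi_cls by (simp add: mult_cls cls_eq nf_def)
  have xc: "xi z \<in> carrier FQ" for z by (simp add: xi_cls)
  have "Pw S (\<psi> W) (\<nu> x) (\<nu> y)" unfolding Pw_def
  proof (intro conjI)
    show "\<psi> W \<in> carrier S" using Pc[OF Wc] .
    show "\<psi> W \<otimes>\<^bsub>S\<^esub> \<psi> W = \<psi> W" using Pm[OF Wc Wc] m1 by simp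
    show "\<psi> W \<otimes>\<^bsub>S\<^esub> \<nu> x = \<nu> x" using Pm[OF Wc xc] m2 px by metis
    show "\<nu> y \<otimes>\<^bsub>S\<^esub> \<psi> W = \<nu> y" using Pm[OF xc Wc] m4 px by metis
    have c3: "cls [Lt (lprime x), Wg x y] \<in> carrier FQ" by simp
    have c5: "cls [Wg x y, Lt (lprime y)] \<in> carrier FQ" by simp
    have "\<psi> W = \<nu> x \<otimes>\<^bsub>S\<^esub> \<psi> (cls [Lt (lprime x), Wg x y])"
      using Pm[OF xc[of x] c3] m3 px by metis
    then show "\<exists>s\<in>carrier S. \<psi> W = \<nu> x \<otimes>\<^bsub>S\<^esub> s" using Pc[OF c3] by blast
    have "\<psi> W = \<psi> (cls [Wg x y, Lt (lprime y)]) \<otimes>\<^bsub>S\<^esub> \<nu> y"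
      using Pm[OF c5 xc[of y]] m5 px by metis
    then show "\<exists>t\<in>carrier S. \<psi> W = t \<otimes>\<^bsub>S\<^esub> \<nu> y" using Pc[OF c5] by blast
  qed
  then have "\<psi> W = Ew S (\<nu> x) (\<nu> y)"
    using Pw_unique[OF S1 nu_in[OF m] nu_in[OF m] _ Pw_E[OF S m]] by blast
  then show ?thesis using Wg W_def by simp
qed

lemma uniq_word:
  assumes psi: "\<psi> \<in> hom FQ S" and px: "\<forall>y. \<psi> (xi y) = \<nu> y"
  shows "w \<noteq> [] \<Longrightarrow> \<psi> (cls w) = phi0 S \<nu> w"
proof (induction w)
  case Nil then show ?case by simp
next
  case (Cons a w)
  show ?case
  proof (cases "w = []")
    case True then show ?thesis using uniq_letter[OF psi px] by simp
  next
    case False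
    have "cls (a # w) = cls [a] \<otimes>\<^bsub>FQ\<^esub> cls w" using False by (simp add: mult_cls)
    then have "\<psi> (cls (a # w)) = \<psi> (cls [a]) \<otimes>\<^bsub>S\<^esub> \<psi> (cls w)"
      using psi False unfolding hom_def by simp
    then show ?thesis using Cons False uniq_letter[OF psi px] by (simp add: phi0_cons)
  qed
qed

lemma bifree_part:
  "\<exists>\<phi> \<in> hom (FQ :: 'a tlet list set monoid) S.
          (\<forall>y. \<phi> (xi y) = \<nu> y) \<and>
          (\<forall>\<psi> \<in> hom (FQ :: 'a tlet list set monoid) S.
             (\<forall>y. \<psi> (xi y) = \<nu> y) \<longrightarrow> (\<forall>a \<in> carrier FQ. \<psi> a = \<phi> a))"
proof (rule bexI[OF _ phiQ_hom], intro conjI allI ballI impI)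
  show "phiQ S \<nu> (xi y) = \<nu> y" for y by (rule phiQ_xi)
next
  fix \<psi> and A :: "'a tlet list set"
  assume psi: "\<psi> \<in> hom FQ S" and px: "\<forall>y. \<psi> (xi y) = \<nu> y" and A: "A \<in> carrier FQ"
  then obtain w where "w \<noteq> []" "A = cls w" by (auto simp: carrier_FQ)
  then show "\<psi> A = phiQ S \<nu> A" using uniq_word[OF psi px] by (simp add: phiQ_cls)
qed

end

theorem proposition2p6:
  shows "bs_congruence (Theta_CS :: ('a tlet list \<times> 'a tlet list) set) \<and>
    completely_simple (FQ :: 'a tlet list set monoid) \<and>
    matched (FQ :: 'a tlet list set monoid) xi \<and>
    (\<forall>(S :: ('b, 'c) monoid_scheme) (\<nu> :: 'a lit \<Rightarrow> 'b).
       completely_simple S \<and> matched S \<nu> \<longrightarrow>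
       (\<exists>\<phi> \<in> hom (FQ :: 'a tlet list set monoid) S.
          (\<forall>y. \<phi> (xi y) = \<nu> y) \<and>
          (\<forall>\<psi> \<in> hom (FQ :: 'a tlet list set monoid) S.
             (\<forall>y. \<psi> (xi y) = \<nu> y) \<longrightarrow> (\<forall>a \<in> carrier FQ. \<psi> a = \<phi> a))))"
  using bs_cong cs_FQ matched_FQ bifree_part by blast

end
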